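(* Let $A$ be a subset of a real vector space such that $\mathrm{we}(A)$ is a cone and every element of $\mathrm{we}(A)$ has a unique decomposition in terms of $A$. Then $A$ is a minimal set, and every element of $A$ is an extreme point of $\mathrm{we}(A)$.
   Context: $\mathrm{we}(A)$ is the set of all $\sum_{i=1}^n\alpha_ix_i$ with $n\in\mathbb N$, $\alpha_i\ge0$, $x_i\in A$. A cone is a subset $K$ closed under addition and multiplication by nonnegative scalars with $K\cap(-K)=\{0\}$. An element $x\in\mathrm{we}(A)$ has a unique decomposition in terms of $A$ if for all mutually different $x_1,\dots,x_n\in A$ and all $\alpha_i,\beta_i\ge0$, $x=\sum_i\alpha_ix_i=\sum_i\beta_ix_i$ implies $\alpha_i=\beta_i$ for all $i$. $A$ is minimal if $\mathrm{we}(A\setminus\{x\})\ne\mathrm{we}(A)$ for all $x\in A$. An element $x\in K\setminus\{0\}$ of a cone $K$ is an extreme point if whenever $y,z\in K\setminus\{0\}$ and $x=y+z$, then $y=\alpha x$ and $z=\beta x$ for some $\alpha,\beta>0$. *)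

theory Defs
  imports "HOL-Analysis.Analysis"
begin

definition we :: "'a::real_vector set \<Rightarrow> 'a set" where
  "we A = {x. \<exists>S \<alpha>. finite S \<and> S \<subseteq> A \<and> (\<forall>s\<in>S. \<alpha> s \<ge> 0) \<and>
                   x = (\<Sum>s\<in>S. \<alpha> s *\<^sub>R s)}"

definition is_cone :: "'a::real_vector set \<Rightarrow> bool" where
  "is_cone K \<longleftrightarrow> (\<forall>x\<in>K. \<forall>y\<in>K. x + y \<in> K) \<and> (\<forall>x\<in>K. \<forall>c::real. c \<ge> 0 \<longrightarrow> c *\<^sub>R x \<in> K)
     \<and> K \<inter> uminus ` K = {0}"

definition unique_decomposition :: "'a::real_vector set \<Rightarrow> 'a \<Rightarrow> bool" where
  "unique_decomposition A x \<longleftrightarrow>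
     (\<forall>S \<alpha> \<beta>. finite S \<and> S \<subseteq> A \<and> (\<forall>s\<in>S. \<alpha> s \<ge> 0 \<and> \<beta> s \<ge> 0) \<and>
        x = (\<Sum>s\<in>S. \<alpha> s *\<^sub>R s) \<and> x = (\<Sum>s\<in>S. \<beta> s *\<^sub>R s) \<longrightarrow> (\<forall>s\<in>S. \<alpha> s = \<beta> s))"

definition minimal_set :: "'a::real_vector set \<Rightarrow> bool" where
  "minimal_set A \<longleftrightarrow> (\<forall>x\<in>A. we (A - {x}) \<noteq> we A)"

definition extreme_point :: "'a::real_vector set \<Rightarrow> 'a \<Rightarrow> bool" where
  "extreme_point K x \<longleftrightarrow> x \<in> K - {0} \<and>
     (\<forall>y\<in>K - {0}. \<forall>z\<in>K - {0}. x = y + z \<longrightarrow>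
        (\<exists>a b::real. a > 0 \<and> b > 0 \<and> y = a *\<^sub>R x \<and> z = b *\<^sub>R x))"

end

theory Submission
  imports Defs
begin

lemma ext_sum:
  fixes f :: "'a::real_vector \<Rightarrow> real"
  assumes "finite T" "S \<subseteq> T"
  shows "(\<Sum>s\<in>T. (if s \<in> S then f s else 0) *\<^sub>R s) = (\<Sum>s\<in>S. f s *\<^sub>R s)"
proof -
  have "(\<Sum>s\<in>T. (if s \<in> S then f s else 0) *\<^sub>R s) = (\<Sum>s\<in>T. (if s \<in> S then f s *\<^sub>R s else 0))"
    by (rule sum.cong) auto
  also have "\<dots> = (\<Sum>s\<in>T \<inter> S. f s *\<^sub>R s)" using assms(1) by (rule sum.inter_restrict[symmetric])
  also have "T \<inter> S = S" using assms(2) by blast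
  finally show ?thesis .
qed

lemma single_sum:
  fixes x :: "'a::real_vector"
  assumes "finite T" "x \<in> T"
  shows "(\<Sum>s\<in>T. (if s = x then c else 0) *\<^sub>R s) = c *\<^sub>R x"
  using ext_sum[of T "{x}" "\<lambda>_. c"] assms by simp

theorem mainTheorem19:
  fixes A :: "'a::real_vector set"
  assumes "is_cone (we A)"
    and "\<forall>x\<in>we A. unique_decomposition A x"
  shows "minimal_set A \<and> (\<forall>x\<in>A. extreme_point (we A) x)"
proof
  have inA: "x \<in> we A" if "x \<in> A" for x
    unfolding we_def using that
    by (intro CollectI exI[of _ "{x}"] exI[of _ "\<lambda>_. 1"]) auto
  show "minimal_set A"
    unfolding minimal_set_def
  proof (intro ballI notI)
    fix x assume x: "x \<in> A" and eq: "we (A - {x}) = we A"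
    then have "x \<in> we (A - {x})" using inA by simp
    then obtain S a where S: "finite S" "S \<subseteq> A - {x}" "\<forall>s\<in>S. a s \<ge> 0"
      "x = (\<Sum>s\<in>S. a s *\<^sub>R s)" unfolding we_def by blast
    define T where "T = insert x S"
    have fT: "finite T" "T \<subseteq> A" "x \<in> T" "S \<subseteq> T" using S x by (auto simp: T_def)
    have 1: "x = (\<Sum>s\<in>T. (if s \<in> S then a s else 0) *\<^sub>R s)"
      using ext_sum[OF fT(1) fT(4)] S(4) by simp
    have 2: "x = (\<Sum>s\<in>T. (if s = x then 1 else 0) *\<^sub>R s)"
      using single_sum[OF fT(1) fT(3), of 1] by simp
    have U: "\<And>S \<alpha> \<beta>. finite S \<Longrightarrow> S \<subseteq> A \<Longrightarrow> (\<forall>s\<in>S. \<alpha> s \<ge> 0 \<and> \<beta> s \<ge> 0) \<Longrightarrow>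
        x = (\<Sum>s\<in>S. \<alpha> s *\<^sub>R s) \<Longrightarrow> x = (\<Sum>s\<in>S. \<beta> s *\<^sub>R s) \<Longrightarrow> (\<forall>s\<in>S. \<alpha> s = \<beta> s)"
      using assms(2) inA x unfolding unique_decomposition_def by blast
    have "\<forall>s\<in>T. (if s \<in> S then a s else 0) = (if s = x then 1 else (0::real))"
      by (rule U[OF fT(1) fT(2) _ 1 2]) (use S(3) in auto)
    then have "(if x \<in> S then a x else 0) = (1::real)" using fT(3) by auto
    moreover have "x \<notin> S" using S(2) by blast
    ultimately show False by simp
  qed
  show "\<forall>x\<in>A. extreme_point (we A) x"
  proof
    fix x assume x: "x \<in> A"
    have x0: "x \<noteq> 0"
    proof
      assume "x = 0"
      have ud0: "unique_decomposition A 0" using assms(2) inA x \<open>x = 0\<close> by blast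
      then have "\<forall>s\<in>{x}. (\<lambda>_. 1::real) s = (\<lambda>_. 0) s"
        using spec[OF spec[OF spec[OF ud0[unfolded unique_decomposition_def], of "{x}"], of "\<lambda>_. 1"], of "\<lambda>_. 0"]
          x \<open>x = 0\<close> by simp
      then show False by simp
    qed
    show "extreme_point (we A) x"
      unfolding extreme_point_def
    proof (intro conjI ballI impI)
      show "x \<in> we A - {0}" using inA x x0 by simp
      fix y z assume y: "y \<in> we A - {0}" and z: "z \<in> we A - {0}" and xyz: "x = y + z"
      obtain S1 a where S1: "finite S1" "S1 \<subseteq> A" "\<forall>s\<in>S1. a s \<ge> 0"
        "y = (\<Sum>s\<in>S1. a s *\<^sub>R s)" using y unfolding we_def by blast
      obtain S2 b where S2: "finite S2" "S2 \<subseteq> A" "\<forall>s\<in>S2. b s \<ge> 0"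
        "z = (\<Sum>s\<in>S2. b s *\<^sub>R s)" using z unfolding we_def by blast
      define T where "T = insert x (S1 \<union> S2)"
      define ga where "ga s = (if s \<in> S1 then a s else 0)" for s
      define gb where "gb s = (if s \<in> S2 then b s else 0)" for s
      have fT: "finite T" "T \<subseteq> A" "x \<in> T" "S1 \<subseteq> T" "S2 \<subseteq> T"
        using S1 S2 x by (auto simp: T_def)
      have ga0: "ga s \<ge> 0" for s using S1(3) by (simp add: ga_def)
      have gb0: "gb s \<ge> 0" for s using S2(3) by (simp add: gb_def)
      have yT: "y = (\<Sum>s\<in>T. ga s *\<^sub>R s)"
        using ext_sum[OF fT(1) fT(4)] S1(4) by (simp add: ga_def)
      have zT: "z = (\<Sum>s\<in>T. gb s *\<^sub>R s)"
        using ext_sum[OF fT(1) fT(5)] S2(4) by (simp add: gb_def)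
      have 1: "x = (\<Sum>s\<in>T. (ga s + gb s) *\<^sub>R s)"
        using xyz yT zT by (simp add: scaleR_add_left sum.distrib)
      have 2: "x = (\<Sum>s\<in>T. (if s = x then 1 else 0) *\<^sub>R s)"
        using single_sum[OF fT(1) fT(3), of 1] by simp
      have U: "\<And>S \<alpha> \<beta>. finite S \<Longrightarrow> S \<subseteq> A \<Longrightarrow> (\<forall>s\<in>S. \<alpha> s \<ge> 0 \<and> \<beta> s \<ge> 0) \<Longrightarrow>
        x = (\<Sum>s\<in>S. \<alpha> s *\<^sub>R s) \<Longrightarrow> x = (\<Sum>s\<in>S. \<beta> s *\<^sub>R s) \<Longrightarrow> (\<forall>s\<in>S. \<alpha> s = \<beta> s)"
      using assms(2) inA x unfolding unique_decomposition_def by blast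
      have eqs: "\<forall>s\<in>T. ga s + gb s = (if s = x then 1 else (0::real))"
        by (rule U[OF fT(1) fT(2) _ 1 2]) (use ga0 gb0 in auto)
      have gae: "ga s = (if s = x then ga x else 0)" if "s \<in> T" for s
        using eqs[rule_format, OF that] ga0[of s] gb0[of s] by (cases "s = x") auto
      have "y = (\<Sum>s\<in>T. (if s = x then ga x else 0) *\<^sub>R s)"
        unfolding yT by (rule sum.cong) (use gae in auto)
      then have ya: "y = ga x *\<^sub>R x"
        using single_sum[OF fT(1) fT(3), of "ga x"] by simp
      have gbe: "gb s = (if s = x then gb x else 0)" if "s \<in> T" for s
        using eqs[rule_format, OF that] ga0[of s] gb0[of s] by (cases "s = x") auto
      have "z = (\<Sum>s\<in>T. (if s = x then gb x else 0) *\<^sub>R s)"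
        unfolding zT by (rule sum.cong) (use gbe in auto)
      then have zb: "z = gb x *\<^sub>R x"
        using single_sum[OF fT(1) fT(3), of "gb x"] by simp
      have "ga x \<noteq> 0" using ya y by auto
      moreover have "gb x \<noteq> 0" using zb z by auto
      ultimately show "\<exists>a b::real. a > 0 \<and> b > 0 \<and> y = a *\<^sub>R x \<and> z = b *\<^sub>R x"
        using ga0 gb0 ya zb by (metis less_eq_real_def)
    qed
  qed
qed

end
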